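(* Let $\mathcal{X}$, $f_i$, the breakpoints and the piecewise linear functions $\overline{f}_i$ be as in the context, and consider the problem (SP): $\min_{(y,x)\in\mathcal{X}}\sum_{i=1}^{n_y}\overline{f}_i(y_i)+\sum_{\omega\in\Omega_1}p_\omega c_\omega^Tx_\omega$. Let $(y^*,x^* )\in\mathcal{X}$ be an optimal solution of (SP). Then (SP) has an optimal solution that is an extreme point of the polyhedron $\mathcal{X}(y^* )=\{(y,x)\in\mathcal{X}: y_i=y^*_i \ \forall i\in\{1,\dots,n_{\mathrm{I}}\}\}$.
   Context: Let $\Omega_1$ be a finite index set, $n_y\geq n_{\mathrm{I}}\geq0$ integers, $A\in\mathbb{R}^{m_1\times n_y}$, $b\in\mathbb{R}^{m_1}$, $D\in\mathbb{R}^{m_2\times n_y}$, and for each $\omega\in\Omega_1$: $p_\omega\in\mathbb{R}$, $c_\omega\in\mathbb{R}^{n_x}$, $B_\omega\in\mathbb{R}^{m_2\times n_x}$, $d_\omega\in\mathbb{R}^{m_2}$. Let $\mathcal{X}=\{(y,\{x_\omega\}_{\omega\in\Omega_1})\geq0: y\in\mathbb{Z}^{n_{\mathrm{I}}}\times\mathbb{R}^{n_y-n_{\mathrm{I}}},\ Ay=b,\ B_\omega x_\omega+Dy=d_\omega\ \forall\omega\in\Omega_1\}$, assumed nonempty and bounded, so that there are vectors $\underline{y}\leq\overline{y}$ with $\underline{y}\leq y\leq\overline{y}$ for all $(y,x)\in\mathcal{X}$. Functions $f_i:\mathbb{R}\to\mathbb{R}$ ($i=1,\dots,n_y$) are concave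 and lower semicontinuous. For each $i$, given breakpoints $y_i^{(1)}<y_i^{(2)}<\dots<y_i^{(k_i)}$ ($k_i\geq2$) with $y_i\in[y_i^{(1)},y_i^{(k_i)}]$ for every $(y,x)\in\mathcal{X}$, define $\overline{f}_i:[y_i^{(1)},y_i^{(k_i)}]\to\mathbb{R}$ by $\overline{f}_i(y_i)=\frac{f_i(y_i^{(j+1)})-f_i(y_i^{(j)})}{y_i^{(j+1)}-y_i^{(j)}}(y_i-y_i^{(j)})+f_i(y_i^{(j)})$ for $y_i\in[y_i^{(j)},y_i^{(j+1)}]$, $j=1,\dots,k_i-1$ (the formulas agree at common breakpoints). *)

theory Defs
  imports "HOL-Analysis.Analysis"
begin

text \<open>Conventions: indices are 0-based. y :: nat => real with y i, i < ny the
components (zero outside); x :: 'w => nat => real with x w j, w in Omega, j < nx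
the components (zero outside).\<close>

definition lsc :: "(real \<Rightarrow> real) \<Rightarrow> bool" where
  "lsc f \<longleftrightarrow> (\<forall>a. closed {t. f t \<le> a})"

definition feasX ::
  "nat \<Rightarrow> nat \<Rightarrow> nat \<Rightarrow> 'w set \<Rightarrow>
   nat \<Rightarrow> (nat \<Rightarrow> nat \<Rightarrow> real) \<Rightarrow> (nat \<Rightarrow> real) \<Rightarrow>
   nat \<Rightarrow> (nat \<Rightarrow> nat \<Rightarrow> real) \<Rightarrow> ('w \<Rightarrow> nat \<Rightarrow> nat \<Rightarrow> real) \<Rightarrow> ('w \<Rightarrow> nat \<Rightarrow> real) \<Rightarrow>
   ((nat \<Rightarrow> real) \<times> ('w \<Rightarrow> nat \<Rightarrow> real)) set" where
  "feasX nI ny nx \<Omega> m1 A b m2 D B d =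
     {(y, x). (\<forall>i. ny \<le> i \<longrightarrow> y i = 0)
            \<and> (\<forall>w j. w \<notin> \<Omega> \<or> nx \<le> j \<longrightarrow> x w j = 0)
            \<and> (\<forall>i<ny. 0 \<le> y i)
            \<and> (\<forall>w\<in>\<Omega>. \<forall>j<nx. 0 \<le> x w j)
            \<and> (\<forall>i<nI. y i \<in> \<int>)
            \<and> (\<forall>r<m1. (\<Sum>i<ny. A r i * y i) = b r)
            \<and> (\<forall>w\<in>\<Omega>. \<forall>r<m2. (\<Sum>j<nx. B w r j * x w j) + (\<Sum>i<ny. D r i * y i) = d w r)}"

text \<open>Piecewise linear interpolation of f i at breakpoints bp i 0 < ... < bp i (k i - 1).\<close>
definition fbar :: "(nat \<Rightarrow> real \<Rightarrow> real) \<Rightarrow> (nat \<Rightarrow> nat \<Rightarrow> real) \<Rightarrow> (nat \<Rightarrow> nat) \<Rightarrow> nat \<Rightarrow> real \<Rightarrow> real" where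
  "fbar f bp k i t =
     (let j = (LEAST j. j + 1 < k i \<and> bp i j \<le> t \<and> t \<le> bp i (j + 1)) in
        (f i (bp i (j + 1)) - f i (bp i j)) / (bp i (j + 1) - bp i j) * (t - bp i j) + f i (bp i j))"

definition sp_obj :: "nat \<Rightarrow> nat \<Rightarrow> 'w set \<Rightarrow> (nat \<Rightarrow> real \<Rightarrow> real) \<Rightarrow> (nat \<Rightarrow> nat \<Rightarrow> real) \<Rightarrow>
   (nat \<Rightarrow> nat) \<Rightarrow> ('w \<Rightarrow> real) \<Rightarrow> ('w \<Rightarrow> nat \<Rightarrow> real) \<Rightarrow>
   (nat \<Rightarrow> real) \<times> ('w \<Rightarrow> nat \<Rightarrow> real) \<Rightarrow> real" where
  "sp_obj ny nx \<Omega> f bp k p c z =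
     (\<Sum>i<ny. fbar f bp k i (fst z i)) + (\<Sum>w\<in>\<Omega>. p w * (\<Sum>j<nx. c w j * snd z w j))"

definition comb :: "real \<Rightarrow> (nat \<Rightarrow> real) \<times> ('w \<Rightarrow> nat \<Rightarrow> real) \<Rightarrow>
   (nat \<Rightarrow> real) \<times> ('w \<Rightarrow> nat \<Rightarrow> real) \<Rightarrow> (nat \<Rightarrow> real) \<times> ('w \<Rightarrow> nat \<Rightarrow> real)" where
  "comb t u v = ((\<lambda>i. t * fst u i + (1 - t) * fst v i),
                 (\<lambda>w j. t * snd u w j + (1 - t) * snd v w j))"

definition extreme_pt :: "(nat \<Rightarrow> real) \<times> ('w \<Rightarrow> nat \<Rightarrow> real) \<Rightarrow>
   ((nat \<Rightarrow> real) \<times> ('w \<Rightarrow> nat \<Rightarrow> real)) set \<Rightarrow> bool" where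
  "extreme_pt z S \<longleftrightarrow> z \<in> S \<and>
     \<not> (\<exists>u\<in>S. \<exists>v\<in>S. u \<noteq> v \<and> (\<exists>t. 0 < t \<and> t < 1 \<and> z = comb t u v))"

end

theory Submission
  imports Defs
begin

lemma secant_above:
  fixes F :: "real \<Rightarrow> real"
  assumes cc: "concave_on UNIV F" and ab: "a < b" and s: "s \<le> a \<or> b \<le> s"
  shows "F s \<le> (F b - F a) / (b - a) * (s - a) + F a"
proof -
  have D: "\<And>l x y. 0 \<le> l \<Longrightarrow> l \<le> 1 \<Longrightarrow> (1 - l) * F x + l * F y \<le> F ((1 - l) * x + l * y)"
    using concave_onD[OF cc] by simp
  have key: "(b - a) * F s \<le> (F b - F a) * (s - a) + (b - a) * F a"
  proof (cases "s \<le> a")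
    case True
    show ?thesis
    proof (cases "s = a")
      case True then show ?thesis by simp
    next
      case False
      with True have sa: "s < a" by simp
      define l where "l = (a - s) / (b - s)"
      have l0: "0 \<le> l" "l \<le> 1" using sa ab by (auto simp: l_def field_simps)
      have "l * (b - s) = a - s" using sa ab by (simp add: l_def)
      hence "(1 - l) * s + l * b = a" by (simp add: algebra_simps)
      with D[OF l0, of s b] have "(1 - l) * F s + l * F b \<le> F a" by simp
      hence "(b - s) * ((1 - l) * F s + l * F b) \<le> (b - s) * F a"
        using sa ab by (intro mult_left_mono) auto
      moreover have h: "(b - s) * l = a - s" using sa ab by (simp add: l_def)
      moreover have "(b - s) * ((1 - l) * F s + l * F b) = (b - s) * F s - ((b - s) * l) * F s + ((b - s) * l) * F b"
        by (simp add: algebra_simps)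
      moreover have "(b - s) * F s - ((b - s) * l) * F s + ((b - s) * l) * F b = (b - s) * F s - (a - s) * F s + (a - s) * F b"
        by (simp only: h)
      ultimately have "(b - a) * F s + (a - s) * F b \<le> (b - s) * F a"
        by (simp add: algebra_simps)
      then show ?thesis by (simp add: algebra_simps)
    qed
  next
    case False
    with s have bs: "b \<le> s" by simp
    show ?thesis
    proof (cases "s = b")
      case True then show ?thesis by (simp add: algebra_simps)
    next
      case False
      with bs have sb: "b < s" by simp
      define l where "l = (s - b) / (s - a)"
      have l0: "0 \<le> l" "l \<le> 1" using sb ab by (auto simp: l_def field_simps)
      have "l * (a - s) = b - s" using sb ab by (simp add: l_def divide_simps algebra_simps)
      hence "(1 - l) * s + l * a = b" by (simp add: algebra_simps)
      with D[OF l0, of s a] have "(1 - l) * F s + l * F a \<le> F b" by simp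
      hence "(s - a) * ((1 - l) * F s + l * F a) \<le> (s - a) * F b"
        using sb ab by (intro mult_left_mono) auto
      moreover have h: "(s - a) * l = s - b" using sb ab by (simp add: l_def)
      moreover have "(s - a) * ((1 - l) * F s + l * F a) = (s - a) * F s - ((s - a) * l) * F s + ((s - a) * l) * F a"
        by (simp add: algebra_simps)
      moreover have "(s - a) * F s - ((s - a) * l) * F s + ((s - a) * l) * F a = (s - a) * F s - (s - b) * F s + (s - b) * F a"
        by (simp only: h)
      ultimately have "(b - a) * F s + (s - b) * F a \<le> (s - a) * F b"
        by (simp add: algebra_simps)
      then show ?thesis by (simp add: algebra_simps)
    qed
  qed
  have "F s = ((b - a) * F s) / (b - a)" using ab by simp
  also have "\<dots> \<le> ((F b - F a) * (s - a) + (b - a) * F a) / (b - a)"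
    using key ab by (intro divide_right_mono) auto
  also have "\<dots> = (F b - F a) / (b - a) * (s - a) + F a" using ab by (simp add: field_simps)
  finally show ?thesis .
qed

lemma affine_between:
  fixes \<alpha> \<beta> p q t :: real
  assumes "p \<le> t" "t \<le> q" "0 \<le> \<alpha> * p + \<beta>" "0 \<le> \<alpha> * q + \<beta>"
  shows "0 \<le> \<alpha> * t + \<beta>"
proof (cases "0 \<le> \<alpha>")
  case True
  then have "\<alpha> * p \<le> \<alpha> * t" using assms by (intro mult_left_mono) auto
  then show ?thesis using assms by linarith
next
  case False
  then have "\<alpha> * q \<le> \<alpha> * t" using assms by (intro mult_left_mono_neg) auto
  then show ?thesis using assms by linarith
qed

lemma strict_mono_bp:
  fixes a :: "nat \<Rightarrow> real"
  assumes "\<forall>j. j + 1 < K \<longrightarrow> a j < a (j + 1)"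
  shows "j < j' \<Longrightarrow> j' < K \<Longrightarrow> a j < a j'"
proof (induction j')
  case 0 then show ?case by simp
next
  case (Suc n)
  then show ?case using assms by (cases "j = n") (auto simp: less_Suc_eq)
qed

lemma mono_bp:
  fixes a :: "nat \<Rightarrow> real"
  assumes "\<forall>j. j + 1 < K \<longrightarrow> a j < a (j + 1)"
  shows "j \<le> j' \<Longrightarrow> j' < K \<Longrightarrow> a j \<le> a j'"
  using strict_mono_bp[OF assms, of j j'] by (cases "j = j'") auto

definition secL :: "(real \<Rightarrow> real) \<Rightarrow> (nat \<Rightarrow> real) \<Rightarrow> nat \<Rightarrow> real \<Rightarrow> real" where
  "secL F a j t = (F (a (j + 1)) - F (a j)) / (a (j + 1) - a j) * (t - a j) + F (a j)"

lemma secL_ge: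
  fixes F :: "real \<Rightarrow> real" and a :: "nat \<Rightarrow> real"
  assumes cc: "concave_on UNIV F"
    and mono: "\<forall>j. j + 1 < K \<longrightarrow> a j < a (j + 1)"
    and j: "j + 1 < K" and j0: "j0 + 1 < K"
    and t: "a j0 \<le> t" "t \<le> a (j0 + 1)"
  shows "secL F a j0 t \<le> secL F a j t"
proof (cases "j = j0")
  case True then show ?thesis by simp
next
  case False
  have m: "\<And>x y. x \<le> y \<Longrightarrow> y < K \<Longrightarrow> a x \<le> a y" using mono_bp[OF mono] by blast
  have out: "a j0 \<le> a j \<or> a (j + 1) \<le> a j0" "a (j0 + 1) \<le> a j \<or> a (j + 1) \<le> a (j0 + 1)"
    using False m[of j0 j] m[of "j + 1" j0] m[of "j0+1" j] m[of "j+1" "j0+1"] j j0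
    by (cases "j < j0"; auto)+
  have ajj: "a j < a (j + 1)" using mono j by blast
  have aj0: "a j0 < a (j0 + 1)" using mono j0 by blast
  have e1: "F (a j0) \<le> secL F a j (a j0)"
    using secant_above[OF cc ajj, of "a j0"] out(1) by (auto simp: secL_def)
  have e2: "F (a (j0+1)) \<le> secL F a j (a (j0+1))"
    using secant_above[OF cc ajj, of "a (j0+1)"] out(2) by (auto simp: secL_def)
  define s where "s = (F (a (j + 1)) - F (a j)) / (a (j + 1) - a j)"
  define s0 where "s0 = (F (a (j0 + 1)) - F (a j0)) / (a (j0 + 1) - a j0)"
  have L: "\<And>x. secL F a j x = s * x + (F (a j) - s * a j)" unfolding secL_def s_def[symmetric] by (simp add: right_diff_distrib)
  have L0: "\<And>x. secL F a j0 x = s0 * x + (F (a j0) - s0 * a j0)" unfolding secL_def s0_def[symmetric] by (simp add: right_diff_distrib)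
  have L0a: "secL F a j0 (a j0) = F (a j0)" by (simp add: secL_def)
  have L0b: "secL F a j0 (a (j0+1)) = F (a (j0+1))" using aj0 by (simp add: secL_def)
  have "0 \<le> (s - s0) * t + ((F (a j) - s * a j) - (F (a j0) - s0 * a j0))"
  proof (rule affine_between[OF t])
    show "0 \<le> (s - s0) * a j0 + (F (a j) - s * a j - (F (a j0) - s0 * a j0))"
      using e1 L0a L[of "a j0"] L0[of "a j0"] by (simp add: algebra_simps)
    show "0 \<le> (s - s0) * a (j0+1) + (F (a j) - s * a j - (F (a j0) - s0 * a j0))"
      using e2 L0b L[of "a (j0+1)"] L0[of "a (j0+1)"] by (simp add: algebra_simps)
  qed
  then show ?thesis using L[of t] L0[of t] by (simp add: algebra_simps)
qed

lemma fbar_eq: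
  assumes k2: "2 \<le> k i" and mono: "\<forall>j. j + 1 < k i \<longrightarrow> bp i j < bp i (j + 1)"
    and t: "bp i 0 \<le> t" "t \<le> bp i (k i - 1)"
  shows "\<exists>j. j + 1 < k i \<and> bp i j \<le> t \<and> t \<le> bp i (j + 1) \<and> fbar f bp k i t = secL (f i) (bp i) j t"
proof -
  define P where "P = (\<lambda>j. j + 1 < k i \<and> bp i j \<le> t \<and> t \<le> bp i (j + 1))"
  define J where "J = {j. j + 1 < k i \<and> bp i j \<le> t}"
  have finJ: "finite J" unfolding J_def by (rule finite_subset[of _ "{..<k i}"]) auto
  have J0: "0 \<in> J" using k2 t unfolding J_def by auto
  define j where "j = Max J"
  have jJ: "j \<in> J" using finJ J0 unfolding j_def by (intro Max_in) auto
  have jmax: "\<And>j'. j' \<in> J \<Longrightarrow> j' \<le> j" using finJ unfolding j_def by auto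
  have "P j"
  proof (cases "Suc j + 1 < k i")
    case True
    have "Suc j \<notin> J" using jmax by fastforce
    then have "t < bp i (j + 1)" using True unfolding J_def by auto
    then show ?thesis using jJ unfolding P_def J_def by auto
  next
    case False
    with jJ have "j + 1 = k i - 1" unfolding J_def by auto
    then show ?thesis using jJ t unfolding P_def J_def by auto
  qed
  then have ex: "\<exists>j. P j" by blast
  define j0 where "j0 = (LEAST j. P j)"
  have Pj0: "P j0" unfolding j0_def using LeastI_ex[OF ex] .
  have "fbar f bp k i t = secL (f i) (bp i) j0 t"
    unfolding fbar_def secL_def Let_def j0_def P_def by simp
  then show ?thesis using Pj0 unfolding P_def by blast
qed

lemma fbar_concave:
  assumes cc: "concave_on UNIV (f i)" and k2: "2 \<le> k i"
    and mono: "\<forall>j. j + 1 < k i \<longrightarrow> bp i j < bp i (j + 1)"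
    and t1: "bp i 0 \<le> t1" "t1 \<le> bp i (k i - 1)"
    and t2: "bp i 0 \<le> t2" "t2 \<le> bp i (k i - 1)"
    and l: "0 \<le> l" "l \<le> 1"
  shows "l * fbar f bp k i t1 + (1 - l) * fbar f bp k i t2 \<le> fbar f bp k i (l * t1 + (1 - l) * t2)"
proof -
  define m where "m = l * t1 + (1 - l) * t2"
  have "l * bp i 0 \<le> l * t1" "(1 - l) * bp i 0 \<le> (1 - l) * t2"
    using l t1 t2 by (auto intro: mult_left_mono)
  then have m1: "bp i 0 \<le> m" unfolding m_def by (simp add: algebra_simps)
  have "l * t1 \<le> l * bp i (k i - 1)" "(1 - l) * t2 \<le> (1 - l) * bp i (k i - 1)"
    using l t1 t2 by (auto intro: mult_left_mono)
  then have m2: "m \<le> bp i (k i - 1)" unfolding m_def by (simp add: algebra_simps)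
  obtain j0 where j0: "j0 + 1 < k i" "fbar f bp k i m = secL (f i) (bp i) j0 m"
    using fbar_eq[where k=k and i=i and bp=bp and f=f, OF k2 mono m1 m2] by blast
  obtain j1 where j1: "j1 + 1 < k i" "bp i j1 \<le> t1" "t1 \<le> bp i (j1 + 1)" "fbar f bp k i t1 = secL (f i) (bp i) j1 t1"
    using fbar_eq[where k=k and i=i and bp=bp and f=f, OF k2 mono t1] by blast
  obtain j2 where j2: "j2 + 1 < k i" "bp i j2 \<le> t2" "t2 \<le> bp i (j2 + 1)" "fbar f bp k i t2 = secL (f i) (bp i) j2 t2"
    using fbar_eq[where k=k and i=i and bp=bp and f=f, OF k2 mono t2] by blast
  have e1: "fbar f bp k i t1 \<le> secL (f i) (bp i) j0 t1"
    using secL_ge[OF cc mono j0(1) j1(1) j1(2,3)] j1(4) by simp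
  have e2: "fbar f bp k i t2 \<le> secL (f i) (bp i) j0 t2"
    using secL_ge[OF cc mono j0(1) j2(1) j2(2,3)] j2(4) by simp
  have aff: "secL (f i) (bp i) j0 m = l * secL (f i) (bp i) j0 t1 + (1 - l) * secL (f i) (bp i) j0 t2"
  proof -
    have g: "\<And>S c d :: real. S * ((l * t1 + (1 - l) * t2) - c) + d = l * (S * (t1 - c) + d) + (1 - l) * (S * (t2 - c) + d)"
      by (simp add: algebra_simps)
    show ?thesis unfolding secL_def m_def by (rule g)
  qed
  have "l * fbar f bp k i t1 + (1 - l) * fbar f bp k i t2 \<le> l * secL (f i) (bp i) j0 t1 + (1 - l) * secL (f i) (bp i) j0 t2"
    using e1 e2 l by (intro add_mono mult_left_mono) auto
  then show ?thesis using aff j0(2) unfolding m_def by simp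
qed

fun coord :: "nat + ('w \<times> nat) \<Rightarrow> (nat \<Rightarrow> real) \<times> ('w \<Rightarrow> nat \<Rightarrow> real) \<Rightarrow> real" where
  "coord (Inl i) z = fst z i"
| "coord (Inr (w, j)) z = snd z w j"

definition coordset :: "nat \<Rightarrow> nat \<Rightarrow> 'w set \<Rightarrow> (nat + ('w \<times> nat)) set" where
  "coordset ny nx \<Omega> = Inl ` {..<ny} \<union> Inr ` (\<Omega> \<times> {..<nx})"

lemma finite_coordset: "finite \<Omega> \<Longrightarrow> finite (coordset ny nx \<Omega>)"
  unfolding coordset_def by auto

lemma coord_comb: "coord c (comb s u v) = s * coord c u + (1 - s) * coord c v"
  by (cases c) (auto simp: comb_def)

lemma comb_comb: "comb a (comb b u v) v = comb (a * b) u v"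
  unfolding comb_def by (auto simp: algebra_simps)

lemma feasX_iff: "(y, x) \<in> feasX nI ny nx \<Omega> m1 A b m2 D B d \<longleftrightarrow>
          (\<forall>i. ny \<le> i \<longrightarrow> y i = 0)
            \<and> (\<forall>w j. w \<notin> \<Omega> \<or> nx \<le> j \<longrightarrow> x w j = 0)
            \<and> (\<forall>i<ny. 0 \<le> y i)
            \<and> (\<forall>w\<in>\<Omega>. \<forall>j<nx. 0 \<le> x w j)
            \<and> (\<forall>i<nI. y i \<in> \<int>)
            \<and> (\<forall>r<m1. (\<Sum>i<ny. A r i * y i) = b r)
            \<and> (\<forall>w\<in>\<Omega>. \<forall>r<m2. (\<Sum>j<nx. B w r j * x w j) + (\<Sum>i<ny. D r i * y i) = d w r)"
  unfolding feasX_def by (simp only: mem_Collect_eq prod.case)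

lemma X_nonneg:
  assumes "z \<in> feasX nI ny nx \<Omega> m1 A b m2 D B d" "c \<in> coordset ny nx \<Omega>"
  shows "0 \<le> coord c z"
proof -
  obtain y x where z: "z = (y, x)" by (cases z)
  note F = assms(1)[unfolded z feasX_iff]
  show ?thesis
  proof (cases c)
    case (Inl i)
    then have "i < ny" using assms(2) by (auto simp: coordset_def)
    then show ?thesis using F Inl z by simp
  next
    case (Inr wj)
    then obtain w j where "c = Inr (w, j)" by (cases wj) auto
    moreover from this have "w \<in> \<Omega>" "j < nx" using assms(2) by (auto simp: coordset_def)
    ultimately show ?thesis using F z by simp
  qed
qed

lemma X_diff:
  assumes "u \<in> feasX nI ny nx \<Omega> m1 A b m2 D B d" "v \<in> feasX nI ny nx \<Omega> m1 A b m2 D B d" "u \<noteq> v"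
  shows "\<exists>c\<in>coordset ny nx \<Omega>. coord c u \<noteq> coord c v"
proof -
  obtain uy ux vy vx where uv: "u = (uy, ux)" "v = (vy, vx)" by (cases u, cases v) auto
  note U = assms(1)[unfolded uv feasX_iff]
  note V = assms(2)[unfolded uv feasX_iff]
  show ?thesis
  proof (cases "uy = vy")
    case False
    then obtain i where i: "uy i \<noteq> vy i" by auto
    have "i < ny"
    proof (rule ccontr)
      assume "\<not> i < ny"
      then have "uy i = 0" "vy i = 0" using U V by auto
      then show False using i by simp
    qed
    then show ?thesis using i uv by (intro bexI[of _ "Inl i"]) (auto simp: coordset_def)
  next
    case True
    then have "ux \<noteq> vx" using assms(3) uv by auto
    then obtain w j where wj: "ux w j \<noteq> vx w j" by (meson ext)
    have "w \<in> \<Omega> \<and> j < nx"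
    proof (rule ccontr)
      assume "\<not> (w \<in> \<Omega> \<and> j < nx)"
      then have "w \<notin> \<Omega> \<or> nx \<le> j" by auto
      then have "ux w j = 0" "vx w j = 0" using U V by blast+
      then show False using wj by simp
    qed
    then show ?thesis using wj uv by (intro bexI[of _ "Inr (w, j)"]) (auto simp: coordset_def)
  qed
qed

lemma sum_comb: fixes A u v :: "'b \<Rightarrow> real" shows "(\<Sum>i\<in>I. A i * (s * u i + (1 - s) * v i)) = s * (\<Sum>i\<in>I. A i * u i) + (1 - s) * (\<Sum>i\<in>I. A i * v i)"
proof -
  have "\<And>i. A i * (s * u i + (1 - s) * v i) = s * (A i * u i) + (1 - s) * (A i * v i)" by (simp add: algebra_simps)
  then show ?thesis by (simp add: sum.distrib sum_distrib_left)
qed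

lemma comb_in_X:
  assumes u: "u \<in> feasX nI ny nx \<Omega> m1 A b m2 D B d" and v: "v \<in> feasX nI ny nx \<Omega> m1 A b m2 D B d"
    and same: "\<forall>i<nI. fst u i = fst v i"
    and nn: "\<forall>c\<in>coordset ny nx \<Omega>. 0 \<le> coord c (comb s u v)"
  shows "comb s u v \<in> feasX nI ny nx \<Omega> m1 A b m2 D B d"
proof -
  obtain uy ux vy vx where uv: "u = (uy, ux)" "v = (vy, vx)" by (cases u, cases v) auto
  note U = u[unfolded uv feasX_iff]
  note V = v[unfolded uv feasX_iff]
  have nny: "\<forall>i<ny. 0 \<le> s * uy i + (1 - s) * vy i"
  proof (intro allI impI)
    fix i assume "i < ny"
    then show "0 \<le> s * uy i + (1 - s) * vy i" using nn[rule_format, of "Inl i"] uv by (auto simp: coordset_def comb_def)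
  qed
  have nnx: "\<forall>w\<in>\<Omega>. \<forall>j<nx. 0 \<le> s * ux w j + (1 - s) * vx w j"
  proof (intro ballI allI impI)
    fix w j assume "w \<in> \<Omega>" "j < nx"
    then show "0 \<le> s * ux w j + (1 - s) * vx w j" using nn[rule_format, of "Inr (w, j)"] uv by (auto simp: coordset_def comb_def)
  qed
  have int: "\<forall>i<nI. s * uy i + (1 - s) * vy i \<in> \<int>"
  proof (intro allI impI)
    fix i assume "i < nI"
    then have "uy i = vy i" "uy i \<in> \<int>" using same uv U by auto
    then show "s * uy i + (1 - s) * vy i \<in> \<int>" by (simp add: algebra_simps)
  qed
  have eq1: "\<forall>r<m1. (\<Sum>i<ny. A r i * (s * uy i + (1 - s) * vy i)) = b r"
  proof (intro allI impI)
    fix r assume r: "r < m1"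
    have "(\<Sum>i<ny. A r i * (s * uy i + (1 - s) * vy i)) = s * (\<Sum>i<ny. A r i * uy i) + (1 - s) * (\<Sum>i<ny. A r i * vy i)"
      by (rule sum_comb)
    also have "\<dots> = s * b r + (1 - s) * b r" using U V r by simp
    finally show "(\<Sum>i<ny. A r i * (s * uy i + (1 - s) * vy i)) = b r" by (simp add: algebra_simps)
  qed
  have eq2: "\<forall>w\<in>\<Omega>. \<forall>r<m2. (\<Sum>j<nx. B w r j * (s * ux w j + (1 - s) * vx w j)) + (\<Sum>i<ny. D r i * (s * uy i + (1 - s) * vy i)) = d w r"
  proof (intro ballI allI impI)
    fix w r assume w: "w \<in> \<Omega>" and r: "r < m2"
    have "(\<Sum>j<nx. B w r j * (s * ux w j + (1 - s) * vx w j)) + (\<Sum>i<ny. D r i * (s * uy i + (1 - s) * vy i))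
       = s * ((\<Sum>j<nx. B w r j * ux w j) + (\<Sum>i<ny. D r i * uy i)) + (1 - s) * ((\<Sum>j<nx. B w r j * vx w j) + (\<Sum>i<ny. D r i * vy i))"
      by (simp only: sum_comb) (simp add: algebra_simps)
    also have "\<dots> = s * d w r + (1 - s) * d w r" using U V w r by simp
    also have "\<dots> = d w r" by (simp add: algebra_simps)
    finally show "(\<Sum>j<nx. B w r j * (s * ux w j + (1 - s) * vx w j)) + (\<Sum>i<ny. D r i * (s * uy i + (1 - s) * vy i)) = d w r" .
  qed
  have sup1: "\<forall>i. ny \<le> i \<longrightarrow> s * uy i + (1 - s) * vy i = 0" using U V by simp
  have sup2: "\<forall>w j. w \<notin> \<Omega> \<or> nx \<le> j \<longrightarrow> s * ux w j + (1 - s) * vx w j = 0" using U V by simp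
  show ?thesis unfolding uv comb_def fst_conv snd_conv feasX_iff using nny nnx int eq1 eq2 sup1 sup2
    by blast
qed

theorem lemma1:
  fixes \<Omega> :: "'w set"
    and nI ny nx m1 m2 :: nat
    and A :: "nat \<Rightarrow> nat \<Rightarrow> real" and b :: "nat \<Rightarrow> real"
    and D :: "nat \<Rightarrow> nat \<Rightarrow> real"
    and B :: "'w \<Rightarrow> nat \<Rightarrow> nat \<Rightarrow> real" and d :: "'w \<Rightarrow> nat \<Rightarrow> real"
    and p :: "'w \<Rightarrow> real" and c :: "'w \<Rightarrow> nat \<Rightarrow> real"
    and f :: "nat \<Rightarrow> real \<Rightarrow> real"
    and bp :: "nat \<Rightarrow> nat \<Rightarrow> real" and k :: "nat \<Rightarrow> nat"
    and ys :: "nat \<Rightarrow> real" and xs :: "'w \<Rightarrow> nat \<Rightarrow> real"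
  assumes fin: "finite \<Omega>"
    and nI: "nI \<le> ny"
    and nonempty: "feasX nI ny nx \<Omega> m1 A b m2 D B d \<noteq> {}"
    and bounded: "\<exists>M. \<forall>(y, x) \<in> feasX nI ny nx \<Omega> m1 A b m2 D B d.
                     (\<forall>i<ny. \<bar>y i\<bar> \<le> M) \<and> (\<forall>w\<in>\<Omega>. \<forall>j<nx. \<bar>x w j\<bar> \<le> M)"
    and concave: "\<forall>i<ny. concave_on UNIV (f i)"
    and lsc: "\<forall>i<ny. lsc (f i)"
    and k2: "\<forall>i<ny. 2 \<le> k i"
    and bp_mono: "\<forall>i<ny. \<forall>j. j + 1 < k i \<longrightarrow> bp i j < bp i (j + 1)"
    and bp_range: "\<forall>(y, x) \<in> feasX nI ny nx \<Omega> m1 A b m2 D B d.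
                     \<forall>i<ny. bp i 0 \<le> y i \<and> y i \<le> bp i (k i - 1)"
    and opt_mem: "(ys, xs) \<in> feasX nI ny nx \<Omega> m1 A b m2 D B d"
    and opt: "\<forall>z \<in> feasX nI ny nx \<Omega> m1 A b m2 D B d.
                sp_obj ny nx \<Omega> f bp k p c (ys, xs) \<le> sp_obj ny nx \<Omega> f bp k p c z"
  shows "\<exists>z. extreme_pt z {(y, x) \<in> feasX nI ny nx \<Omega> m1 A b m2 D B d. \<forall>i<nI. y i = ys i}
            \<and> (\<forall>z' \<in> feasX nI ny nx \<Omega> m1 A b m2 D B d.
                  sp_obj ny nx \<Omega> f bp k p c z \<le> sp_obj ny nx \<Omega> f bp k p c z')"
proof -
  define X where "X = feasX nI ny nx \<Omega> m1 A b m2 D B d"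
  define S where "S = {(y, x) \<in> X. \<forall>i<nI. y i = ys i}"
  define g where "g = sp_obj ny nx \<Omega> f bp k p c"
  define gs where "gs = g (ys, xs)"
  define C where "C = coordset ny nx \<Omega>"
  have finC: "finite C" unfolding C_def using fin by (rule finite_coordset)
  have SX: "S \<subseteq> X" unfolding S_def by auto
  have ysS: "(ys, xs) \<in> S" using opt_mem unfolding S_def X_def by auto
  have gmin: "\<And>z. z \<in> X \<Longrightarrow> gs \<le> g z" using opt unfolding gs_def g_def X_def by blast
  have Sfst: "\<And>z i. z \<in> S \<Longrightarrow> i < nI \<Longrightarrow> fst z i = ys i" unfolding S_def by auto
  have nnX: "\<And>z c. z \<in> X \<Longrightarrow> c \<in> C \<Longrightarrow> 0 \<le> coord c z" unfolding X_def C_def by (rule X_nonneg)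
  have rangeX: "\<And>z i. z \<in> X \<Longrightarrow> i < ny \<Longrightarrow> bp i 0 \<le> fst z i \<and> fst z i \<le> bp i (k i - 1)"
    using bp_range unfolding X_def by auto
  have sum_comb2: "\<And>I a bb (t::real). (\<Sum>i\<in>I. t * a i + (1 - t) * bb i) = t * sum a I + (1 - t) * sum bb I"
    by (simp add: sum.distrib sum_distrib_left)
  have conc: "t * g u + (1 - t) * g v \<le> g (comb t u v)"
    if u: "u \<in> X" and v: "v \<in> X" and t: "0 \<le> t" "t \<le> 1" for u v t
  proof -
    have y: "t * fbar f bp k i (fst u i) + (1 - t) * fbar f bp k i (fst v i) \<le> fbar f bp k i (fst (comb t u v) i)"
      if i: "i < ny" for i
    proof -
      have "t * fbar f bp k i (fst u i) + (1 - t) * fbar f bp k i (fst v i) \<le> fbar f bp k i (t * fst u i + (1 - t) * fst v i)"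
        using fbar_concave[of f i k bp "fst u i" "fst v i" t] concave k2 bp_mono rangeX[OF u i] rangeX[OF v i] t i
        by blast
      then show ?thesis by (simp add: comb_def)
    qed
    have lin: "(\<Sum>w\<in>\<Omega>. p w * (\<Sum>j<nx. c w j * snd (comb t u v) w j))
       = t * (\<Sum>w\<in>\<Omega>. p w * (\<Sum>j<nx. c w j * snd u w j)) + (1 - t) * (\<Sum>w\<in>\<Omega>. p w * (\<Sum>j<nx. c w j * snd v w j))"
      by (simp add: comb_def sum_comb)
    have "t * g u + (1 - t) * g v = (\<Sum>i<ny. t * fbar f bp k i (fst u i) + (1 - t) * fbar f bp k i (fst v i))
       + (t * (\<Sum>w\<in>\<Omega>. p w * (\<Sum>j<nx. c w j * snd u w j)) + (1 - t) * (\<Sum>w\<in>\<Omega>. p w * (\<Sum>j<nx. c w j * snd v w j)))"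
      unfolding g_def sp_obj_def sum_comb2 by (simp add: algebra_simps)
    also have "\<dots> \<le> (\<Sum>i<ny. fbar f bp k i (fst (comb t u v) i)) + (\<Sum>w\<in>\<Omega>. p w * (\<Sum>j<nx. c w j * snd (comb t u v) w j))"
      unfolding lin using y by (intro add_mono sum_mono) auto
    also have "\<dots> = g (comb t u v)" unfolding g_def sp_obj_def by simp
    finally show ?thesis .
  qed
  have face: "g u = gs \<and> g v = gs"
    if u: "u \<in> S" and v: "v \<in> S" and t: "0 < t" "t < 1" and gz: "g (comb t u v) = gs" for u v t
  proof -
    have c1: "t * g u + (1 - t) * g v \<le> gs" using conc[of u v t] u v t gz SX by auto
    have a1: "0 \<le> t * (g u - gs)" using gmin[of u] u SX t by auto
    have a2: "0 \<le> (1 - t) * (g v - gs)" using gmin[of v] v SX t by auto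
    have "t * (g u - gs) + (1 - t) * (g v - gs) \<le> 0" using c1 by (simp add: algebra_simps)
    then have "t * (g u - gs) = 0" "(1 - t) * (g v - gs) = 0" using a1 a2 by linarith+
    then show ?thesis using t by auto
  qed
  have combS: "comb s u v \<in> S"
    if u: "u \<in> S" and v: "v \<in> S" and nn: "\<forall>c\<in>C. 0 \<le> coord c (comb s u v)" for u v s
  proof -
    have same: "\<forall>i<nI. fst u i = fst v i" using Sfst u v by auto
    have "comb s u v \<in> X" unfolding X_def
      by (rule comb_in_X[OF _ _ same]) (use u v SX nn in \<open>auto simp: X_def C_def\<close>)
    moreover have "\<forall>i<nI. fst (comb s u v) i = ys i"
      using Sfst[OF u] Sfst[OF v] by (auto simp: comb_def algebra_simps)
    ultimately show ?thesis unfolding S_def by (cases "comb s u v") auto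
  qed
  define zc where "zc z = card {c\<in>C. coord c z = 0}" for z
  have zcb: "zc z < card C + 1" for z
    unfolding zc_def using card_mono[OF finC, of "{c\<in>C. coord c z = 0}"] by auto
  obtain Mb where Mb: "\<And>z c. z \<in> X \<Longrightarrow> c \<in> C \<Longrightarrow> \<bar>coord c z\<bar> \<le> Mb"
  proof -
    obtain M0 where M0: "\<forall>(y, x) \<in> X. (\<forall>i<ny. \<bar>y i\<bar> \<le> M0) \<and> (\<forall>w\<in>\<Omega>. \<forall>j<nx. \<bar>x w j\<bar> \<le> M0)"
      using bounded unfolding X_def by blast
    have "\<bar>coord cc z\<bar> \<le> M0" if "z \<in> X" "cc \<in> C" for z cc
    proof -
      obtain y x where z: "z = (y, x)" by (cases z)
      have "(\<forall>i<ny. \<bar>y i\<bar> \<le> M0) \<and> (\<forall>w\<in>\<Omega>. \<forall>j<nx. \<bar>x w j\<bar> \<le> M0)" using M0 that(1) z by auto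
      then show ?thesis using that(2) z unfolding C_def coordset_def by auto
    qed
    then show ?thesis using that by blast
  qed
  obtain z0 where z0: "z0 \<in> S \<and> g z0 = gs" and z0max: "\<And>z. z \<in> S \<and> g z = gs \<Longrightarrow> zc z \<le> zc z0"
    using ex_has_greatest_nat[of "\<lambda>z. z \<in> S \<and> g z = gs" "(ys, xs)" zc "card C + 1"] ysS zcb
    unfolding gs_def by blast
  have ext: "extreme_pt z0 S"
  proof (rule ccontr)
    assume "\<not> extreme_pt z0 S"
    then obtain u v t where u: "u \<in> S" and v: "v \<in> S" and uv: "u \<noteq> v" and t: "0 < t" "t < 1"
      and z0c: "z0 = comb t u v"
      using z0 unfolding extreme_pt_def by blast
    have guv: "g u = gs" "g v = gs" using face[OF u v t] z0 z0c by auto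
    have nnu: "\<And>cc. cc \<in> C \<Longrightarrow> 0 \<le> coord cc u" using nnX[OF subsetD[OF SX u]] by blast
    have nnv: "\<And>cc. cc \<in> C \<Longrightarrow> 0 \<le> coord cc v" using nnX[OF subsetD[OF SX v]] by blast
    have ex: "\<exists>cc\<in>C. coord cc u < coord cc v"
    proof (rule ccontr)
      assume "\<not> ?thesis"
      then have ge: "\<And>cc. cc \<in> C \<Longrightarrow> coord cc v \<le> coord cc u" by auto
      obtain c1 where c1: "c1 \<in> C" "coord c1 u \<noteq> coord c1 v"
        using X_diff[of u nI ny nx \<Omega> m1 A b m2 D B d v] u v SX uv unfolding X_def C_def by auto
      have c1lt: "coord c1 v < coord c1 u" using ge[OF c1(1)] c1(2) by auto
      define s where "s = (\<bar>Mb\<bar> + 1) / (coord c1 u - coord c1 v)"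
      have s0: "0 \<le> s" unfolding s_def using c1lt by auto
      have nn: "\<forall>cc\<in>C. 0 \<le> coord cc (comb s u v)"
      proof
        fix cc assume cc: "cc \<in> C"
        have "coord cc (comb s u v) = coord cc v + s * (coord cc u - coord cc v)"
          by (simp add: coord_comb algebra_simps)
        moreover have "0 \<le> s * (coord cc u - coord cc v)" using ge[OF cc] s0 by auto
        ultimately show "0 \<le> coord cc (comb s u v)" using nnv[OF cc] by linarith
      qed
      have inS: "comb s u v \<in> S" using combS[OF u v nn] .
      have "coord c1 (comb s u v) = coord c1 v + s * (coord c1 u - coord c1 v)"
        by (simp add: coord_comb algebra_simps)
      also have "s * (coord c1 u - coord c1 v) = \<bar>Mb\<bar> + 1" unfolding s_def using c1lt by auto
      finally have "coord c1 (comb s u v) = coord c1 v + (\<bar>Mb\<bar> + 1)" .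
      moreover have "\<bar>coord c1 (comb s u v)\<bar> \<le> Mb" using Mb[of "comb s u v" c1] inS SX c1(1) by auto
      ultimately show False using nnv[OF c1(1)] by linarith
    qed
    define rat where "rat cc = coord cc v / (coord cc v - coord cc u)" for cc
    define R where "R = rat ` {cc\<in>C. coord cc u < coord cc v}"
    have finR: "finite R" unfolding R_def using finC by auto
    have neR: "R \<noteq> {}" unfolding R_def using ex by auto
    define s' where "s' = Min R"
    obtain c0 where c0: "c0 \<in> C" "coord c0 u < coord c0 v" "s' = rat c0"
      using Min_in[OF finR neR] unfolding s'_def R_def by auto
    have sle: "\<And>cc. cc \<in> C \<Longrightarrow> coord cc u < coord cc v \<Longrightarrow> s' \<le> rat cc"
      unfolding s'_def R_def using finR R_def by (intro Min_le) auto
    have z0coord: "\<And>cc. coord cc z0 = t * coord cc u + (1 - t) * coord cc v"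
      unfolding z0c by (rule coord_comb)
    have zpos: "0 < coord cc z0" if cc: "cc \<in> C" "coord cc u < coord cc v" for cc
    proof -
      have "0 \<le> t * coord cc u" using t nnu[OF cc(1)] by auto
      moreover have "0 < (1 - t) * coord cc v" using t nnu[OF cc(1)] cc(2) by auto
      ultimately show ?thesis using z0coord[of cc] by linarith
    qed
    have ratmul: "rat cc * (coord cc v - coord cc u) = coord cc v" if "coord cc u < coord cc v" for cc
      unfolding rat_def using that by auto
    have rt: "t < rat cc" if cc: "cc \<in> C" "coord cc u < coord cc v" for cc
    proof -
      have "t * (coord cc v - coord cc u) < coord cc v"
        using zpos[OF cc] z0coord[of cc] by (simp add: algebra_simps)
      then show ?thesis unfolding rat_def using cc(2) by (simp add: pos_less_divide_eq)
    qed
    have ts: "t < s'" using rt[OF c0(1,2)] c0(3) by simp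
    define z' where "z' = comb s' u v"
    have z'coord: "\<And>cc. coord cc z' = coord cc v - s' * (coord cc v - coord cc u)"
      unfolding z'_def coord_comb by (simp add: algebra_simps)
    have nn': "\<forall>cc\<in>C. 0 \<le> coord cc (comb s' u v)"
    proof
      fix cc assume cc: "cc \<in> C"
      show "0 \<le> coord cc (comb s' u v)"
      proof (cases "coord cc u < coord cc v")
        case True
        have "s' * (coord cc v - coord cc u) \<le> rat cc * (coord cc v - coord cc u)"
          using sle[OF cc True] True by (intro mult_right_mono) auto
        then show ?thesis using ratmul[OF True] z'coord[of cc] unfolding z'_def by linarith
      next
        case False
        have "0 \<le> s' * (coord cc u - coord cc v)" using False ts t by auto
        then show ?thesis using z'coord[of cc] nnv[OF cc] unfolding z'_def by (simp add: algebra_simps)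
      qed
    qed
    have z'S: "z' \<in> S" unfolding z'_def using combS[OF u v nn'] .
    have z0c': "z0 = comb (t / s') z' v"
      unfolding z'_def comb_comb z0c using ts t by simp
    have gz': "g z' = gs" using face[OF z'S v, of "t / s'"] z0c' z0 ts t by auto
    have sub: "{cc\<in>C. coord cc z0 = 0} \<subset> {cc\<in>C. coord cc z' = 0}"
    proof
      show "{cc\<in>C. coord cc z0 = 0} \<subseteq> {cc\<in>C. coord cc z' = 0}"
      proof
        fix cc assume "cc \<in> {cc\<in>C. coord cc z0 = 0}"
        then have cc: "cc \<in> C" "coord cc z0 = 0" by auto
        have a1: "0 \<le> t * coord cc u" using t nnu[OF cc(1)] by auto
        have a2: "0 \<le> (1 - t) * coord cc v" using t nnv[OF cc(1)] by auto
        have "t * coord cc u = 0" "(1 - t) * coord cc v = 0" using a1 a2 cc(2) z0coord[of cc] by linarith+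
        then have "coord cc u = 0" "coord cc v = 0" using t by auto
        then show "cc \<in> {cc\<in>C. coord cc z' = 0}" using cc z'coord[of cc] by auto
      qed
      have "coord c0 z' = 0" using z'coord[of c0] ratmul[OF c0(2)] c0(3) by simp
      moreover have "coord c0 z0 \<noteq> 0" using zpos[OF c0(1,2)] by simp
      ultimately show "{cc\<in>C. coord cc z0 = 0} \<noteq> {cc\<in>C. coord cc z' = 0}" using c0(1) by blast
    qed
    have "zc z0 < zc z'" unfolding zc_def
      by (rule psubset_card_mono[OF _ sub]) (use finC in auto)
    moreover have "zc z' \<le> zc z0" using z0max[of z'] z'S gz' by auto
    ultimately show False by simp
  qed
  show ?thesis
  proof (intro exI conjI)
    show "extreme_pt z0 {(y, x) \<in> feasX nI ny nx \<Omega> m1 A b m2 D B d. \<forall>i<nI. y i = ys i}"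
      using ext unfolding S_def X_def .
    show "\<forall>z'\<in>feasX nI ny nx \<Omega> m1 A b m2 D B d. sp_obj ny nx \<Omega> f bp k p c z0 \<le> sp_obj ny nx \<Omega> f bp k p c z'"
      using gmin z0 unfolding X_def g_def by auto
  qed
qed

end
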